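(* A metric formula $\varphi$ is an $\mathrm{MHT}_f$-tautology iff $\sigma(\varphi)$ is an $\mathrm{MHT}_f$-tautology.
   Context: Metric formulas over $\mathcal{A}$: $\varphi ::= p \mid \bot \mid \varphi_1\otimes\varphi_2 \mid \bullet_I\varphi \mid \varphi_1\,\mathsf{S}_I\,\varphi_2 \mid \varphi_1\,\mathsf{T}_I\,\varphi_2 \mid \bigcirc_I\varphi \mid \varphi_1\,\mathsf{U}_I\,\varphi_2 \mid \varphi_1\,\mathsf{R}_I\,\varphi_2$, $\otimes\in\{\to,\wedge,\vee\}$, $I=[m,n)$, $m\in\mathbb{N}$, $n\in\mathbb{N}\cup\{\omega\}$. Derived: $\neg\varphi=\varphi\to\bot$, $\top=\neg\bot$, $\blacksquare_I\varphi=\bot\,\mathsf{T}_I\,\varphi$ (always before), "eventually before" $=\top\,\mathsf{S}_I\,\varphi$, $\widehat{\bullet}_I\varphi=\bullet_I\varphi\vee\neg\bullet_I\top$, $\Box_I\varphi=\bot\,\mathsf{R}_I\,\varphi$, $\Diamond_I\varphi=\top\,\mathsf{U}_I\,\varphi$, $\widehat{\bigcirc}_I\varphi=\bigcirc_I\varphi\vee\neg\bigcirc_I\top$. Timed HT-traces $(\langle\mathbf{H},\mathbf{T}\rangle,\tau)$ of length $\lambda$: $H_i\subseteq T_i\subseteq\mathcal{A}$ for $i\in[0,\lambda)$, $\tau:[0,\lambda)\to\mathbb{N}$, $\tau(0)=0$, $\tau(i)\le\tau(i+1)$. Satisfaction at $k$: $\bot$ never; $p$ iff $p\in H_k$; $\wedge,\vee$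 usual; $\varphi\to\psi$ iff for both $\mathbf{M}'=\mathbf{M}$ and $\mathbf{M}'=(\langle\mathbf{T},\mathbf{T}\rangle,\tau)$, $\mathbf{M}',k\not\models\varphi$ or $\mathbf{M}',k\models\psi$; $\bullet_I\varphi$: $k>0$, $\varphi$ at $k-1$, $\tau(k)-\tau(k-1)\in I$; $\varphi\,\mathsf{S}_I\,\psi$: some $j\in[0,k]$ with $\tau(k)-\tau(j)\in I$, $\psi$ at $j$, $\varphi$ at all $i\in(j,k]$; $\varphi\,\mathsf{T}_I\,\psi$: for all $j\in[0,k]$ with $\tau(k)-\tau(j)\in I$, $\psi$ at $j$ or $\varphi$ at some $i\in(j,k]$; $\bigcirc_I\varphi$: $k+1<\lambda$, $\varphi$ at $k+1$, $\tau(k+1)-\tau(k)\in I$; $\varphi\,\mathsf{U}_I\,\psi$: some $j\in[k,\lambda)$ with $\tau(j)-\tau(k)\in I$, $\psi$ at $j$, $\varphi$ at all $i\in[k,j)$; $\varphi\,\mathsf{R}_I\,\psi$: for all $j\in[k,\lambda)$ with $\tau(j)-\tau(k)\in I$, $\psi$ at $j$ or $\varphi$ at some $i\in[k,j)$. An $\mathrm{MHT}_f$-tautology is a formula satisfied at every $k\in[0,\lambda)$ of every timed HT-trace of finite length $\lambda$. $\sigma(\varphi)$ replaces each connective by its swapped-time version, the pairs being $\mathsf{U}_I/\mathsf{S}_I$, $\mathsf{R}_I/\mathsf{T}_I$, $\bigcirc_I/\bullet_I$, $\widehat{\bigcirc}_I/\widehat{\bullet}_I$, $\Box_I/\blacksquare_I$,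 and $\Diamond_I$ (i.e. $\top\,\mathsf{U}_I\,\cdot$) / eventually before ($\top\,\mathsf{S}_I\,\cdot$). *)

theory Defs
  imports Main "HOL-Library.Extended_Nat"
begin

text \<open>Intervals I = [m, n) with m a natural number and n a natural number or omega
  (represented by an extended natural, infinity = omega).\<close>
type_synonym intv = "nat \<times> enat"

definition in_intv :: "nat \<Rightarrow> intv \<Rightarrow> bool" where
  "in_intv d I \<longleftrightarrow> fst I \<le> d \<and> enat d < snd I"

datatype 'a mform =
    Atom 'a
  | Bot
  | Impl "'a mform" "'a mform"
  | Conj "'a mform" "'a mform"
  | Disj "'a mform" "'a mform"
  | Prev intv "'a mform"
  | Since intv "'a mform" "'a mform"
  | Trig intv "'a mform" "'a mform"
  | Next intv "'a mform"
  | Until intv "'a mform" "'a mform"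
  | Release intv "'a mform" "'a mform"

text \<open>Satisfaction at position k of the timed HT-trace (H,T,tau) of length lam.
  The two arguments H and T are the "here" and "there" traces; implication is
  evaluated both in (H,T) and in (T,T).\<close>
fun sat :: "nat \<Rightarrow> (nat \<Rightarrow> nat) \<Rightarrow> (nat \<Rightarrow> 'a set) \<Rightarrow> (nat \<Rightarrow> 'a set) \<Rightarrow> nat \<Rightarrow> 'a mform \<Rightarrow> bool" where
  "sat lam tau H T k (Atom p) = (p \<in> H k)"
| "sat lam tau H T k Bot = False"
| "sat lam tau H T k (Impl f g) =
     ((sat lam tau H T k f \<longrightarrow> sat lam tau H T k g) \<and>
      (sat lam tau T T k f \<longrightarrow> sat lam tau T T k g))"
| "sat lam tau H T k (Conj f g) = (sat lam tau H T k f \<and> sat lam tau H T k g)"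
| "sat lam tau H T k (Disj f g) = (sat lam tau H T k f \<or> sat lam tau H T k g)"
| "sat lam tau H T k (Prev I f) =
     (k > 0 \<and> sat lam tau H T (k - 1) f \<and> in_intv (tau k - tau (k - 1)) I)"
| "sat lam tau H T k (Since I f g) =
     (\<exists>j\<le>k. in_intv (tau k - tau j) I \<and> sat lam tau H T j g \<and>
        (\<forall>i. j < i \<and> i \<le> k \<longrightarrow> sat lam tau H T i f))"
| "sat lam tau H T k (Trig I f g) =
     (\<forall>j\<le>k. in_intv (tau k - tau j) I \<longrightarrow> sat lam tau H T j g \<or>
        (\<exists>i. j < i \<and> i \<le> k \<and> sat lam tau H T i f))"
| "sat lam tau H T k (Next I f) =
     (k + 1 < lam \<and> sat lam tau H T (k + 1) f \<and> in_intv (tau (k + 1) - tau k) I)"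
| "sat lam tau H T k (Until I f g) =
     (\<exists>j. k \<le> j \<and> j < lam \<and> in_intv (tau j - tau k) I \<and> sat lam tau H T j g \<and>
        (\<forall>i. k \<le> i \<and> i < j \<longrightarrow> sat lam tau H T i f))"
| "sat lam tau H T k (Release I f g) =
     (\<forall>j. k \<le> j \<and> j < lam \<and> in_intv (tau j - tau k) I \<longrightarrow> sat lam tau H T j g \<or>
        (\<exists>i. k \<le> i \<and> i < j \<and> sat lam tau H T i f))"

definition timed_ht_trace :: "nat \<Rightarrow> (nat \<Rightarrow> nat) \<Rightarrow> (nat \<Rightarrow> 'a set) \<Rightarrow> (nat \<Rightarrow> 'a set) \<Rightarrow> bool" where
  "timed_ht_trace lam tau H T \<longleftrightarrow>
     (\<forall>i<lam. H i \<subseteq> T i) \<and> tau 0 = 0 \<and> (\<forall>i. i + 1 < lam \<longrightarrow> tau i \<le> tau (i + 1))"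

definition mht_f_tautology :: "'a mform \<Rightarrow> bool" where
  "mht_f_tautology f \<longleftrightarrow>
     (\<forall>lam tau H T. timed_ht_trace lam tau H T \<longrightarrow> (\<forall>k<lam. sat lam tau H T k f))"

fun sigma :: "'a mform \<Rightarrow> 'a mform" where
  "sigma (Atom p) = Atom p"
| "sigma Bot = Bot"
| "sigma (Impl f g) = Impl (sigma f) (sigma g)"
| "sigma (Conj f g) = Conj (sigma f) (sigma g)"
| "sigma (Disj f g) = Disj (sigma f) (sigma g)"
| "sigma (Prev I f) = Next I (sigma f)"
| "sigma (Since I f g) = Until I (sigma f) (sigma g)"
| "sigma (Trig I f g) = Release I (sigma f) (sigma g)"
| "sigma (Next I f) = Prev I (sigma f)"
| "sigma (Until I f g) = Since I (sigma f) (sigma g)"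
| "sigma (Release I f g) = Trig I (sigma f) (sigma g)"

end

theory Submission
  imports Defs
begin

lemma tdiff_gen:
  fixes lam a b :: nat and tau :: "nat \<Rightarrow> nat"
  assumes mono: "\<And>i j. i \<le> j \<Longrightarrow> j < lam \<Longrightarrow> tau i \<le> tau j"
    and "a \<le> b" "b < lam"
  shows "(tau (lam-1) - tau (lam-1-(lam-1-a))) - (tau (lam-1) - tau (lam-1-(lam-1-b))) = tau b - tau a"
proof -
  have "b \<le> lam-1" "a \<le> lam-1" using assms by auto
  moreover have "tau a \<le> tau b" using assms mono by blast
  moreover have "tau b \<le> tau (lam-1)" using assms mono by simp
  moreover have "lam-1-(lam-1-a) = a" "lam-1-(lam-1-b) = b" using assms by auto
  ultimately show ?thesis by simp
qed

lemma until_since: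
  fixes lam k :: nat and tau tau' :: "nat \<Rightarrow> nat"
  assumes mono: "\<And>i j. i \<le> j \<Longrightarrow> j < lam \<Longrightarrow> tau i \<le> tau j"
    and tau'_def: "tau' = (\<lambda>i. tau (lam-1) - tau (lam-1-i))"
    and Qa: "\<And>i. i < lam \<Longrightarrow> Qa i = Pa (lam-1-i)"
    and Qb: "\<And>i. i < lam \<Longrightarrow> Qb i = Pb (lam-1-i)"
    and k: "k < lam"
  shows "(\<exists>j. k \<le> j \<and> j < lam \<and> in_intv (tau j - tau k) I \<and> Pb j \<and> (\<forall>i. k \<le> i \<and> i < j \<longrightarrow> Pa i))
     = (\<exists>j\<le>lam-1-k. in_intv (tau' (lam-1-k) - tau' j) I \<and> Qb j \<and> (\<forall>i. j < i \<and> i \<le> lam-1-k \<longrightarrow> Qa i))"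
proof (rule iffI)
  have tdiff: "tau' (lam-1-a) - tau' (lam-1-b) = tau b - tau a" if "a \<le> b" "b < lam" for a b
    using tdiff_gen[OF mono that] unfolding tau'_def by simp
  {
    assume "\<exists>j. k \<le> j \<and> j < lam \<and> in_intv (tau j - tau k) I \<and> Pb j \<and> (\<forall>i. k \<le> i \<and> i < j \<longrightarrow> Pa i)"
    then obtain j where j: "k \<le> j" "j < lam" "in_intv (tau j - tau k) I" "Pb j"
        "\<forall>i. k \<le> i \<and> i < j \<longrightarrow> Pa i" by blast
    show "\<exists>j\<le>lam-1-k. in_intv (tau' (lam-1-k) - tau' j) I \<and> Qb j \<and> (\<forall>i. j < i \<and> i \<le> lam-1-k \<longrightarrow> Qa i)"
    proof (intro exI conjI allI impI)
      show "lam-1-j \<le> lam-1-k" using j by simp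
      show "in_intv (tau' (lam-1-k) - tau' (lam-1-j)) I" using j tdiff[of k j] by simp
      show "Qb (lam-1-j)" using j Qb[of "lam-1-j"] by simp
      fix i assume "lam-1-j < i \<and> i \<le> lam-1-k"
      then have i: "i < lam" "k \<le> lam-1-i" "lam-1-i < j" using j by auto
      then have "Pa (lam-1-i)" using j(5) by blast
      then show "Qa i" using Qa[OF i(1)] by simp
    qed
  }
  {
    assume "\<exists>j\<le>lam-1-k. in_intv (tau' (lam-1-k) - tau' j) I \<and> Qb j \<and> (\<forall>i. j < i \<and> i \<le> lam-1-k \<longrightarrow> Qa i)"
    then obtain j where j: "j\<le>lam-1-k" "in_intv (tau' (lam-1-k) - tau' j) I" "Qb j"
        "\<forall>i. j < i \<and> i \<le> lam-1-k \<longrightarrow> Qa i" by blast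
    show "\<exists>j. k \<le> j \<and> j < lam \<and> in_intv (tau j - tau k) I \<and> Pb j \<and> (\<forall>i. k \<le> i \<and> i < j \<longrightarrow> Pa i)"
    proof (intro exI conjI allI impI)
      show "k \<le> lam-1-j" using j k by simp
      show "lam-1-j < lam" using k by simp
      have "j = lam-1-(lam-1-j)" using j k by simp
      then show "in_intv (tau (lam-1-j) - tau k) I" using j tdiff[of k "lam-1-j"] k by simp
      show "Pb (lam-1-j)" using j Qb[of j] k by simp
      fix i assume i: "k \<le> i \<and> i < lam-1-j"
      then have i2: "j < lam-1-i" "lam-1-i \<le> lam-1-k" "lam-1-i < lam" "lam-1-(lam-1-i) = i" using k by auto
      then have "Qa (lam-1-i)" using j(4) by blast
      then show "Pa i" using Qa[OF i2(3)] i2(4) by simp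
    qed
  }
qed

lemma since_until:
  fixes lam k :: nat and tau tau' :: "nat \<Rightarrow> nat"
  assumes mono: "\<And>i j. i \<le> j \<Longrightarrow> j < lam \<Longrightarrow> tau i \<le> tau j"
    and tau'_def: "tau' = (\<lambda>i. tau (lam-1) - tau (lam-1-i))"
    and Qa: "\<And>i. i < lam \<Longrightarrow> Qa i = Pa (lam-1-i)"
    and Qb: "\<And>i. i < lam \<Longrightarrow> Qb i = Pb (lam-1-i)"
    and k: "k < lam"
  shows "(\<exists>j\<le>k. in_intv (tau k - tau j) I \<and> Pb j \<and> (\<forall>i. j < i \<and> i \<le> k \<longrightarrow> Pa i))
     = (\<exists>j. lam-1-k \<le> j \<and> j < lam \<and> in_intv (tau' j - tau' (lam-1-k)) I \<and> Qb j \<and> (\<forall>i. lam-1-k \<le> i \<and> i < j \<longrightarrow> Qa i))"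
proof (rule iffI)
  have tdiff: "tau' (lam-1-a) - tau' (lam-1-b) = tau b - tau a" if "a \<le> b" "b < lam" for a b
    using tdiff_gen[OF mono that] unfolding tau'_def by simp
  {
    assume "\<exists>j\<le>k. in_intv (tau k - tau j) I \<and> Pb j \<and> (\<forall>i. j < i \<and> i \<le> k \<longrightarrow> Pa i)"
    then obtain j where j: "j \<le> k" "in_intv (tau k - tau j) I" "Pb j"
        "\<forall>i. j < i \<and> i \<le> k \<longrightarrow> Pa i" by blast
    show "\<exists>j. lam-1-k \<le> j \<and> j < lam \<and> in_intv (tau' j - tau' (lam-1-k)) I \<and> Qb j \<and> (\<forall>i. lam-1-k \<le> i \<and> i < j \<longrightarrow> Qa i)"
    proof (intro exI conjI allI impI)
      show "lam-1-k \<le> lam-1-j" using j by simp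
      show "lam-1-j < lam" using k by simp
      show "in_intv (tau' (lam-1-j) - tau' (lam-1-k)) I" using j tdiff[of j k] k by simp
      show "Qb (lam-1-j)" using j k Qb[of "lam-1-j"] by simp
      fix i assume "lam-1-k \<le> i \<and> i < lam-1-j"
      then have i: "i < lam" "lam-1-i \<le> k" "j < lam-1-i" using j k by auto
      then have "Pa (lam-1-i)" using j(4) by blast
      then show "Qa i" using Qa[OF i(1)] by simp
    qed
  }
  {
    assume "\<exists>j. lam-1-k \<le> j \<and> j < lam \<and> in_intv (tau' j - tau' (lam-1-k)) I \<and> Qb j \<and> (\<forall>i. lam-1-k \<le> i \<and> i < j \<longrightarrow> Qa i)"
    then obtain j where j: "lam-1-k \<le> j" "j < lam" "in_intv (tau' j - tau' (lam-1-k)) I" "Qb j"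
        "\<forall>i. lam-1-k \<le> i \<and> i < j \<longrightarrow> Qa i" by blast
    show "\<exists>j\<le>k. in_intv (tau k - tau j) I \<and> Pb j \<and> (\<forall>i. j < i \<and> i \<le> k \<longrightarrow> Pa i)"
    proof (intro exI conjI allI impI)
      show "lam-1-j \<le> k" using j k by simp
      have "j = lam-1-(lam-1-j)" using j k by simp
      then show "in_intv (tau k - tau (lam-1-j)) I" using j tdiff[of "lam-1-j" k] k by simp
      show "Pb (lam-1-j)" using j Qb[of j] k by simp
      fix i assume i: "lam-1-j < i \<and> i \<le> k"
      then have i2: "lam-1-k \<le> lam-1-i" "lam-1-i < j" "lam-1-i < lam" "lam-1-(lam-1-i) = i" using k j by auto
      then have "Qa (lam-1-i)" using j(5) by blast
      then show "Pa i" using Qa[OF i2(3)] i2(4) by simp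
    qed
  }
qed

lemma rev_sat:
  assumes mono: "\<And>i j. i \<le> j \<Longrightarrow> j < lam \<Longrightarrow> tau i \<le> tau j"
  defines "tau' \<equiv> \<lambda>i. tau (lam-1) - tau (lam-1-i)"
  shows "k < lam \<Longrightarrow> sat lam tau H T k (sigma f) =
     sat lam tau' (\<lambda>i. H (lam-1-i)) (\<lambda>i. T (lam-1-i)) (lam-1-k) f"
proof -
  have tdiff: "tau' (lam-1-a) - tau' (lam-1-b) = tau b - tau a" if "a \<le> b" "b < lam" for a b
    using tdiff_gen[OF mono that] unfolding tau'_def by simp
  have td: "tau' = (\<lambda>i. tau (lam-1) - tau (lam-1-i))" unfolding tau'_def ..
  show "k < lam \<Longrightarrow> ?thesis"
  proof (induction f arbitrary: k H T)
  case (Prev I f)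
  show ?case
  proof (cases "k+1<lam")
    case True
    have e1: "lam-1-k-1 = lam-1-(k+1)" by simp
    have e2: "tau' (lam-1-k) - tau' (lam-1-(k+1)) = tau (k+1) - tau k"
      using tdiff[of k "k+1"] True by simp
    show ?thesis using Prev.IH[of "k+1" H T] True e2 e1 by simp
  next
    case False then show ?thesis using Prev.prems by simp
  qed
next
  case (Next I f)
  show ?case
  proof (cases "k > 0")
    case True
    have e1: "lam-1-k+1 = lam-1-(k-1)" using True Next.prems by simp
    have e2: "tau' (lam-1-(k-1)) - tau' (lam-1-k) = tau k - tau (k-1)"
      using tdiff[of "k-1" k] True Next.prems by simp
    show ?thesis using Next.IH[of "k-1" H T] True e2 e1 Next.prems by simp
  next
    case False then show ?thesis using Next.prems by simp
  qed
next
  case (Since I f1 f2)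
  show ?case unfolding sigma.simps sat.simps
    by (rule until_since[OF mono td _ _ Since.prems]) (simp_all add: Since.IH)
next
  case (Until I f1 f2)
  show ?case unfolding sigma.simps sat.simps
    by (rule since_until[OF mono td _ _ Until.prems]) (simp_all add: Until.IH)
next
  case (Trig I f1 f2)
  have A: "\<And>i. i < lam \<Longrightarrow> (\<not> sat lam tau' (\<lambda>i. H (lam-1-i)) (\<lambda>i. T (lam-1-i)) i f1) = (\<not> sat lam tau H T (lam-1-i) (sigma f1))"
    using Trig.IH(1) by simp
  have B: "\<And>i. i < lam \<Longrightarrow> (\<not> sat lam tau' (\<lambda>i. H (lam-1-i)) (\<lambda>i. T (lam-1-i)) i f2) = (\<not> sat lam tau H T (lam-1-i) (sigma f2))"
    using Trig.IH(2) by simp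
  have E: "(\<exists>j. k \<le> j \<and> j < lam \<and> in_intv (tau j - tau k) I \<and> \<not> sat lam tau H T j (sigma f2) \<and> (\<forall>i. k \<le> i \<and> i < j \<longrightarrow> \<not> sat lam tau H T i (sigma f1)))
     = (\<exists>j\<le>lam-1-k. in_intv (tau' (lam-1-k) - tau' j) I \<and> \<not> sat lam tau' (\<lambda>i. H (lam-1-i)) (\<lambda>i. T (lam-1-i)) j f2 \<and> (\<forall>i. j < i \<and> i \<le> lam-1-k \<longrightarrow> \<not> sat lam tau' (\<lambda>i. H (lam-1-i)) (\<lambda>i. T (lam-1-i)) i f1))"
    apply (rule until_since[OF mono td]) using A B Trig.prems by blast+
  show ?case unfolding sigma.simps sat.simps using E by blast
next
  case (Release I f1 f2)
  have A: "\<And>i. i < lam \<Longrightarrow> (\<not> sat lam tau' (\<lambda>i. H (lam-1-i)) (\<lambda>i. T (lam-1-i)) i f1) = (\<not> sat lam tau H T (lam-1-i) (sigma f1))"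
    using Release.IH(1) by simp
  have B: "\<And>i. i < lam \<Longrightarrow> (\<not> sat lam tau' (\<lambda>i. H (lam-1-i)) (\<lambda>i. T (lam-1-i)) i f2) = (\<not> sat lam tau H T (lam-1-i) (sigma f2))"
    using Release.IH(2) by simp
  have E: "(\<exists>j\<le>k. in_intv (tau k - tau j) I \<and> \<not> sat lam tau H T j (sigma f2) \<and> (\<forall>i. j < i \<and> i \<le> k \<longrightarrow> \<not> sat lam tau H T i (sigma f1)))
     = (\<exists>j. lam-1-k \<le> j \<and> j < lam \<and> in_intv (tau' j - tau' (lam-1-k)) I \<and> \<not> sat lam tau' (\<lambda>i. H (lam-1-i)) (\<lambda>i. T (lam-1-i)) j f2 \<and> (\<forall>i. lam-1-k \<le> i \<and> i < j \<longrightarrow> \<not> sat lam tau' (\<lambda>i. H (lam-1-i)) (\<lambda>i. T (lam-1-i)) i f1))"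
    apply (rule since_until[OF mono td]) using A B Release.prems by blast+
  show ?case unfolding sigma.simps sat.simps using E by blast
  qed (auto)
qed
lemma sigma_sigma: "sigma (sigma f) = f"
  by (induction f) auto

lemma timed_mono:
  assumes "timed_ht_trace lam tau H T"
  shows "i \<le> j \<Longrightarrow> j < lam \<Longrightarrow> tau i \<le> tau j"
proof (induction j rule: nat_less_induct)
  case (1 j)
  show ?case
  proof (cases "i = j")
    case False
    then have "i \<le> j - 1" "j - 1 < j" "j - 1 < lam" using 1 by auto
    then have "tau i \<le> tau (j-1)" using 1 by blast
    moreover have jj: "j-1+1 = j" using False 1 by simp
    moreover have "tau (j-1) \<le> tau (j-1+1)" using assms 1 jj unfolding timed_ht_trace_def by metis
    ultimately show ?thesis by simp
  qed simp
qed

lemma taut_sigma: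
  fixes f :: "'a mform"
  assumes "mht_f_tautology f"
  shows "mht_f_tautology (sigma f)"
  unfolding mht_f_tautology_def
proof (intro allI impI)
  fix lam tau and H T :: "nat \<Rightarrow> 'a set" and k
  assume tr: "timed_ht_trace lam tau H T" and k: "k < lam"
  have mono: "\<And>i j. i \<le> j \<Longrightarrow> j < lam \<Longrightarrow> tau i \<le> tau j" using timed_mono[OF tr] by blast
  have tr': "timed_ht_trace lam (\<lambda>i. tau (lam-1) - tau (lam-1-i)) (\<lambda>i. H (lam-1-i)) (\<lambda>i. T (lam-1-i))"
    unfolding timed_ht_trace_def
  proof (intro conjI allI impI)
    fix i assume "i < lam" then show "H (lam-1-i) \<subseteq> T (lam-1-i)" using tr unfolding timed_ht_trace_def by simp
  next
    fix i assume i: "i + 1 < lam"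
    have "tau (lam-1-(i+1)) \<le> tau (lam-1-i)" "tau (lam-1-i) \<le> tau (lam-1)" using mono i by auto
    then show "tau (lam-1) - tau (lam-1-i) \<le> tau (lam-1) - tau (lam-1-(i+1))" by (simp add: diff_le_mono2)
  qed simp
  have "sat lam (\<lambda>i. tau (lam-1) - tau (lam-1-i)) (\<lambda>i. H (lam-1-i)) (\<lambda>i. T (lam-1-i)) (lam-1-k) f"
    using assms tr' k unfolding mht_f_tautology_def by simp
  then show "sat lam tau H T k (sigma f)" using rev_sat[where tau=tau and lam=lam and H=H and T=T and f=f, OF mono k] by simp
qed

theorem theorem1:
  fixes \<phi> :: "'a mform"
  shows "mht_f_tautology \<phi> \<longleftrightarrow> mht_f_tautology (sigma \<phi>)"
  using taut_sigma[of \<phi>] taut_sigma[of "sigma \<phi>"] sigma_sigma[of \<phi>] by auto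

end
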